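(* Let $\psi:(0,1]\to(0,\infty)$ with $\psi(1)=1$ and $\lim_{r\to0+}\psi(r)=0$, and let $f\in C^\psi(\mathbb{R}^d)$. (i) If $I_\psi\subset(1,2)$, then for every sufficiently small $\varepsilon>0$ there exists $C=C(d,\psi,\varepsilon)>0$ such that $\|Df\|_{C^0}\le C\|f\|_{C^0}+\varepsilon[Df]_{C^{-1;\psi}}$. (ii) If $I_\psi\subset(2,3)$, then for every sufficiently small $\varepsilon>0$ there exists $C=C(d,\psi,\varepsilon)>0$ such that $\|Df\|_{C^0}+\|D^2f\|_{C^0}\le C\|f\|_{C^0}+\varepsilon[D^2f]_{C^{-2;\psi}}$.
   Context: $g:(0,1]\to(0,\infty)$ is almost increasing if $c\,g(r)\le g(R)$ for some $c\in(0,1]$ and all $0<r\le R\le1$, almost decreasing if $g(R)\le Cg(r)$ for some $C\ge1$ and all $0<r\le R\le1$. $M_\psi=\inf\{\alpha: \psi(r)/r^\alpha\text{ almost decreasing}\}$, $m_\psi=\sup\{\alpha: \psi(r)/r^\alpha\text{ almost increasing}\}$, $I_\psi=[m_\psi,M_\psi]$. $\|f\|_{C^0}=\sup|f|$, $\|D^jf\|_{C^0}=\max_{|\gamma|=j}\|D^\gamma f\|_{C^0}$. For $j\in\mathbb{N}_0$, $[f]_{C^{-j;\psi}}=\sup_x\sup_{0<|h|\le1}\frac{|f(x+h)-f(x)|}{\psi(|h|)|h|^{-j}}$ and $[D^kf]_{C^{-k;\psi}}=\max_{|\gamma|=k}[D^\gamma f]_{C^{-k;\psi}}$. If $m_\psi\in(k,k+1]$,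 $k\in\mathbb{N}_0$, $C^\psi(\mathbb{R}^d)$ is the set of continuous $f$ with $D^\gamma f$ bounded continuous for $|\gamma|\le k$ and $[D^\gamma f]_{C^{-k;\psi}}<\infty$ for $|\gamma|=k$. *)

theory Defs
  imports "HOL-Analysis.Analysis" "HOL-Library.Extended_Real"
begin

definition almost_increasing :: "(real \<Rightarrow> real) \<Rightarrow> bool" where
  "almost_increasing g \<longleftrightarrow>
     (\<exists>c. 0 < c \<and> c \<le> 1 \<and> (\<forall>r R. 0 < r \<and> r \<le> R \<and> R \<le> 1 \<longrightarrow> c * g r \<le> g R))"

definition almost_decreasing :: "(real \<Rightarrow> real) \<Rightarrow> bool" where
  "almost_decreasing g \<longleftrightarrow>
     (\<exists>C. 1 \<le> C \<and> (\<forall>r R. 0 < r \<and> r \<le> R \<and> R \<le> 1 \<longrightarrow> g R \<le> C * g r))"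

text \<open>Upper and lower indices, as extended reals (inf of the empty set is +infinity,
  sup of the empty set is -infinity).\<close>

definition M_psi :: "(real \<Rightarrow> real) \<Rightarrow> ereal" where
  "M_psi \<psi> = Inf (ereal ` {\<alpha>. almost_decreasing (\<lambda>r. \<psi> r / r powr \<alpha>)})"

definition m_psi :: "(real \<Rightarrow> real) \<Rightarrow> ereal" where
  "m_psi \<psi> = Sup (ereal ` {\<alpha>. almost_increasing (\<lambda>r. \<psi> r / r powr \<alpha>)})"

definition I_psi :: "(real \<Rightarrow> real) \<Rightarrow> ereal set" where
  "I_psi \<psi> = {m_psi \<psi> .. M_psi \<psi>}"

definition pdiff :: "'a::euclidean_space \<Rightarrow> ('a \<Rightarrow> real) \<Rightarrow> 'a \<Rightarrow> real" where
  "pdiff i f x = deriv (\<lambda>t. f (x + t *\<^sub>R i)) 0"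

definition has_pdiff :: "'a::euclidean_space \<Rightarrow> ('a \<Rightarrow> real) \<Rightarrow> bool" where
  "has_pdiff i f \<longleftrightarrow> (\<forall>x. (\<lambda>t. f (x + t *\<^sub>R i)) field_differentiable (at 0))"

text \<open>Iterated partial derivative D^gamma, the multi-index gamma given as a list of
  basis directions (applied from the last to the first).\<close>

fun dpart :: "'a::euclidean_space list \<Rightarrow> ('a \<Rightarrow> real) \<Rightarrow> 'a \<Rightarrow> real" where
  "dpart [] f = f"
| "dpart (i # is) f = pdiff i (dpart is f)"

definition mindices :: "nat \<Rightarrow> 'a::euclidean_space list set" where
  "mindices j = {\<gamma>. set \<gamma> \<subseteq> Basis \<and> length \<gamma> = j}"

definition sup0 :: "('a \<Rightarrow> real) \<Rightarrow> real" where
  "sup0 f = Sup (range (\<lambda>x. \<bar>f x\<bar>))"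

definition normD :: "nat \<Rightarrow> ('a::euclidean_space \<Rightarrow> real) \<Rightarrow> real" where
  "normD j f = Max ((\<lambda>\<gamma>. sup0 (dpart \<gamma> f)) ` (mindices j :: 'a list set))"

definition hquot :: "nat \<Rightarrow> (real \<Rightarrow> real) \<Rightarrow> ('a::euclidean_space \<Rightarrow> real) \<Rightarrow> real set" where
  "hquot j \<psi> f = {\<bar>f (x + h) - f x\<bar> / (\<psi> (norm h) * norm h powr (- real j)) | x h.
                    0 < norm h \<and> norm h \<le> 1}"

definition hsemi :: "nat \<Rightarrow> (real \<Rightarrow> real) \<Rightarrow> ('a::euclidean_space \<Rightarrow> real) \<Rightarrow> real" where
  "hsemi j \<psi> f = Sup (hquot j \<psi> f)"

definition semiD :: "nat \<Rightarrow> (real \<Rightarrow> real) \<Rightarrow> ('a::euclidean_space \<Rightarrow> real) \<Rightarrow> real" where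
  "semiD k \<psi> f = Max ((\<lambda>\<gamma>. hsemi k \<psi> (dpart \<gamma> f)) ` (mindices k :: 'a list set))"

definition Cpsi_k :: "(real \<Rightarrow> real) \<Rightarrow> nat \<Rightarrow> ('a::euclidean_space \<Rightarrow> real) \<Rightarrow> bool" where
  "Cpsi_k \<psi> k f \<longleftrightarrow>
     (\<forall>\<gamma>. set \<gamma> \<subseteq> Basis \<and> length \<gamma> < k \<longrightarrow> (\<forall>i\<in>Basis. has_pdiff i (dpart \<gamma> f))) \<and>
     (\<forall>\<gamma>. set \<gamma> \<subseteq> Basis \<and> length \<gamma> \<le> k \<longrightarrow>
          continuous_on UNIV (dpart \<gamma> f) \<and> bounded (range (dpart \<gamma> f))) \<and>
     (\<forall>\<gamma>. set \<gamma> \<subseteq> Basis \<and> length \<gamma> = k \<longrightarrow> bdd_above (hquot k \<psi> (dpart \<gamma> f)))"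

definition Cpsi :: "(real \<Rightarrow> real) \<Rightarrow> ('a::euclidean_space \<Rightarrow> real) set" where
  "Cpsi \<psi> = {f. \<exists>k::nat. ereal (real k) < m_psi \<psi> \<and> m_psi \<psi> \<le> ereal (real k + 1) \<and> Cpsi_k \<psi> k f}"

end

theory Submission
  imports Defs
begin


lemma line_deriv:
  assumes "has_pdiff e u"
  shows "((\<lambda>s. u (x + s *\<^sub>R e)) has_real_derivative pdiff e u (x + t *\<^sub>R e)) (at t)"
proof -
  let ?y = "x + t *\<^sub>R e"
  let ?g = "\<lambda>s. u (?y + s *\<^sub>R e)"
  have "(?g has_field_derivative deriv ?g 0) (at 0)"
    using assms unfolding has_pdiff_def DERIV_deriv_iff_field_differentiable by blast
  hence "(?g has_field_derivative pdiff e u ?y) (at (t + - t))"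
    by (simp add: pdiff_def)
  hence "((\<lambda>s. ?g (s + - t)) has_field_derivative pdiff e u ?y) (at t)"
    by (simp only: DERIV_shift)
  moreover have "(\<lambda>s. ?g (s + - t)) = (\<lambda>s. u (x + s *\<^sub>R e))"
    by (rule ext) (simp add: algebra_simps)
  ultimately show ?thesis by simp
qed

lemma le_sup0:
  assumes "bounded (range u)"
  shows "\<bar>u x\<bar> \<le> sup0 u"
proof -
  obtain B where "\<forall>y\<in>range u. norm y \<le> B" using assms bounded_iff by metis
  hence "bdd_above (range (\<lambda>x. \<bar>u x\<bar>))" by (auto intro!: bdd_aboveI)
  thus ?thesis unfolding sup0_def by (auto intro: cSup_upper)
qed

lemma sup0_le:
  assumes "\<And>x. \<bar>u x\<bar> \<le> B" shows "sup0 u \<le> B"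
  unfolding sup0_def using assms by (auto intro!: cSup_least)

lemma key1d:
  assumes "has_pdiff e u" "bounded (range u)" "0 < t"
  shows "\<exists>\<xi>. 0 < \<xi> \<and> \<xi> < t \<and>
     \<bar>pdiff e u x\<bar> \<le> 2 * sup0 u / t + \<bar>pdiff e u (x + \<xi> *\<^sub>R e) - pdiff e u x\<bar>"
proof -
  obtain \<xi> where xi: "0 < \<xi>" "\<xi> < t"
    "u (x + t *\<^sub>R e) - u (x + 0 *\<^sub>R e) = (t - 0) * pdiff e u (x + \<xi> *\<^sub>R e)"
    using MVT2[OF assms(3), of "\<lambda>s. u (x + s *\<^sub>R e)" "\<lambda>s. pdiff e u (x + s *\<^sub>R e)"]
      line_deriv[OF assms(1)] by blast
  have "\<bar>u (x + t *\<^sub>R e)\<bar> \<le> sup0 u" "\<bar>u x\<bar> \<le> sup0 u" using le_sup0[OF assms(2)] by auto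
  with xi have "t * \<bar>pdiff e u (x + \<xi> *\<^sub>R e)\<bar> \<le> 2 * sup0 u"
    by (simp add: abs_mult[symmetric])
  hence "\<bar>pdiff e u (x + \<xi> *\<^sub>R e)\<bar> \<le> 2 * sup0 u / t" using assms(3)
    by (simp add: pos_le_divide_eq mult.commute)
  thus ?thesis using xi(1,2) by (intro exI[of _ \<xi>]) auto
qed

lemma lip1d:
  assumes "has_pdiff e u" "0 < \<xi>" "\<And>y. \<bar>pdiff e u y\<bar> \<le> M"
  shows "\<bar>u (x + \<xi> *\<^sub>R e) - u x\<bar> \<le> \<xi> * M"
proof -
  obtain z where z: "0 < z" "z < \<xi>"
    "u (x + \<xi> *\<^sub>R e) - u (x + 0 *\<^sub>R e) = (\<xi> - 0) * pdiff e u (x + z *\<^sub>R e)"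
    using MVT2[OF assms(2), of "\<lambda>s. u (x + s *\<^sub>R e)" "\<lambda>s. pdiff e u (x + s *\<^sub>R e)"]
      line_deriv[OF assms(1)] by blast
  thus ?thesis using assms(2) assms(3)[of "x + z *\<^sub>R e"] by (simp add: abs_mult mult_left_mono)
qed

lemma hq_bound:
  assumes "bdd_above (hquot k \<psi> g)" "0 < norm h" "norm h \<le> 1" "0 < \<psi> (norm h)"
  shows "\<bar>g (x + h) - g x\<bar> \<le> hsemi k \<psi> g * (\<psi> (norm h) * norm h powr (- real k))"
proof -
  have d: "0 < \<psi> (norm h) * norm h powr (- real k)" using assms by simp
  have "\<bar>g (x + h) - g x\<bar> / (\<psi> (norm h) * norm h powr (- real k)) \<in> hquot k \<psi> g"
    unfolding hquot_def using assms by blast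
  hence "\<bar>g (x + h) - g x\<bar> / (\<psi> (norm h) * norm h powr (- real k)) \<le> hsemi k \<psi> g"
    unfolding hsemi_def using assms(1) by (rule cSup_upper)
  thus ?thesis using d by (simp add: divide_le_eq)
qed

lemma inc_bound:
  assumes one: "\<psi> 1 = 1" and "almost_increasing (\<lambda>r. \<psi> r / r powr \<alpha>)"
  shows "\<exists>c. 0 < c \<and> c \<le> 1 \<and> (\<forall>r. 0 < r \<and> r \<le> 1 \<longrightarrow> \<psi> r \<le> r powr \<alpha> / c)"
proof -
  obtain c where c: "0 < c" "c \<le> 1"
    "\<forall>r R. 0 < r \<and> r \<le> R \<and> R \<le> 1 \<longrightarrow> c * (\<psi> r / r powr \<alpha>) \<le> \<psi> R / R powr \<alpha>"
    using assms(2) unfolding almost_increasing_def by blast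
  { fix r :: real assume r: "0 < r" "r \<le> 1"
    have "c * (\<psi> r / r powr \<alpha>) \<le> 1" using c(3)[rule_format, of r 1] r one by simp
    hence "\<psi> r \<le> r powr \<alpha> / c" using r c(1)
      by (simp add: field_simps) }
  thus ?thesis using c(1,2) by blast
qed

lemma inc_dec:
  assumes pos: "\<forall>r. 0 < r \<and> r \<le> 1 \<longrightarrow> 0 < \<psi> r" and one: "\<psi> 1 = 1"
    and inc: "almost_increasing (\<lambda>r. \<psi> r / r powr \<alpha>)"
    and dec: "almost_decreasing (\<lambda>r. \<psi> r / r powr \<beta>)"
  shows "\<alpha> \<le> \<beta>"
proof (rule ccontr)
  assume "\<not> \<alpha> \<le> \<beta>"
  hence ab: "\<alpha> - \<beta> > 0" by simp
  obtain c where c: "0 < c" "c \<le> 1" "\<forall>r. 0 < r \<and> r \<le> 1 \<longrightarrow> \<psi> r \<le> r powr \<alpha> / c"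
    using inc_bound[OF one inc] by blast
  obtain C where C: "1 \<le> C"
    "\<forall>r R. 0 < r \<and> r \<le> R \<and> R \<le> 1 \<longrightarrow> \<psi> R / R powr \<beta> \<le> C * (\<psi> r / r powr \<beta>)"
    using dec unfolding almost_decreasing_def by blast
  define r where "r = (c / (2*C)) powr (1 / (\<alpha> - \<beta>))"
  have q: "0 < c / (2*C)" "c / (2*C) \<le> 1" using c C by (auto simp: field_simps)
  have qn: "c / (2*C) \<noteq> 0" using q(1) by linarith
  have r0: "0 < r" using qn unfolding r_def by (simp only: powr_gt_zero) simp
  have r1: "r \<le> 1" unfolding r_def using q ab by (intro powr_le1) auto
  have rab: "r powr (\<alpha> - \<beta>) = c / (2*C)"
    unfolding r_def using q ab c(1) C(1) by (simp add: powr_powr)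
  have ra: "r powr \<alpha> = r powr \<beta> * (c / (2*C))"
    proof -
    have "r powr \<alpha> = r powr (\<beta> + (\<alpha> - \<beta>))" by simp
    also have "\<dots> = r powr \<beta> * r powr (\<alpha> - \<beta>)" by (rule powr_add)
    finally show ?thesis using rab by simp
  qed
  have "1 \<le> C * (\<psi> r / r powr \<beta>)" using C(2)[rule_format, of r 1] r0 r1 one by simp
  hence lo: "r powr \<beta> / C \<le> \<psi> r" using r0 C(1) by (simp add: field_simps)
  have hi: "\<psi> r \<le> r powr \<beta> / (2*C)" using c(3)[rule_format, of r] r0 r1 c(1) ra by simp
  have "r powr \<beta> / (2*C) < r powr \<beta> / C" using r0 C(1) by (simp add: field_simps)
  with lo hi show False by linarith
qed

lemma m_le_M:
  assumes pos: "\<forall>r. 0 < r \<and> r \<le> 1 \<longrightarrow> 0 < \<psi> r" and one: "\<psi> 1 = 1"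
  shows "m_psi \<psi> \<le> M_psi \<psi>"
  unfolding m_psi_def M_psi_def
  by (rule Sup_least, rule Inf_greatest) (auto intro: inc_dec[OF pos one])

lemma get_alpha:
  assumes pos: "\<forall>r. 0 < r \<and> r \<le> 1 \<longrightarrow> 0 < \<psi> r" and one: "\<psi> 1 = 1"
    and I: "I_psi \<psi> \<subseteq> {ereal (real k)<..<ereal (real k + 1)}"
  shows "\<exists>\<alpha> c. \<alpha> > real k \<and> 0 < c \<and> c \<le> 1 \<and> (\<forall>r. 0 < r \<and> r \<le> 1 \<longrightarrow> \<psi> r \<le> r powr \<alpha> / c)"
proof -
  have "m_psi \<psi> \<in> I_psi \<psi>" unfolding I_psi_def using m_le_M[OF pos one] by simp
  hence "ereal (real k) < m_psi \<psi>" using I by auto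
  then obtain x where "x \<in> ereal ` {\<alpha>. almost_increasing (\<lambda>r. \<psi> r / r powr \<alpha>)}" "ereal (real k) < x"
    unfolding m_psi_def less_Sup_iff by blast
  then obtain \<alpha> where "almost_increasing (\<lambda>r. \<psi> r / r powr \<alpha>)" "real k < \<alpha>" by auto
  thus ?thesis using inc_bound[of \<psi>, OF one] by blast
qed

lemma get_k:
  assumes pos: "\<forall>r. 0 < r \<and> r \<le> 1 \<longrightarrow> 0 < \<psi> r" and one: "\<psi> 1 = 1"
    and I: "I_psi \<psi> \<subseteq> {ereal (real k)<..<ereal (real k + 1)}"
    and f: "f \<in> Cpsi \<psi>"
  shows "Cpsi_k \<psi> k f"
proof -
  have "m_psi \<psi> \<in> I_psi \<psi>" unfolding I_psi_def using m_le_M[OF pos one] by simp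
  hence m: "ereal (real k) < m_psi \<psi>" "m_psi \<psi> < ereal (real k + 1)" using I by auto
  obtain j where j: "ereal (real j) < m_psi \<psi>" "m_psi \<psi> \<le> ereal (real j + 1)" "Cpsi_k \<psi> j f"
    using f unfolding Cpsi_def by blast
  have "ereal (real j) < ereal (real k + 1)" using j(1) m(2) by (rule less_trans)
  hence "j \<le> k" by simp
  moreover have "ereal (real k) < ereal (real j + 1)" using m(1) j(2) by (rule less_le_trans)
  hence "k \<le> j" by simp
  ultimately show ?thesis using j(3) by simp
qed

lemma finite_mindices: "finite (mindices k :: 'a::euclidean_space list set)"
  unfolding mindices_def by (rule finite_lists_length_eq[OF finite_Basis])

lemma semi_le:
  assumes "\<gamma> \<in> (mindices k :: 'a::euclidean_space list set)"
  shows "hsemi k \<psi> (dpart \<gamma> f) \<le> semiD k \<psi> f"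
  unfolding semiD_def using assms finite_mindices by (intro Max_ge) auto

lemma sup0_le_normD:
  assumes "\<gamma> \<in> (mindices k :: 'a::euclidean_space list set)"
  shows "sup0 (dpart \<gamma> f) \<le> normD k f"
  unfolding normD_def using assms finite_mindices by (intro Max_ge) auto

lemma mindices1: "\<gamma> \<in> (mindices 1 :: 'a::euclidean_space list set) \<Longrightarrow> \<exists>i\<in>Basis. \<gamma> = [i]"
  unfolding mindices_def by (cases \<gamma>) auto

lemma mindices2: "\<gamma> \<in> (mindices 2 :: 'a::euclidean_space list set) \<Longrightarrow> \<exists>i\<in>Basis. \<exists>j\<in>Basis. \<gamma> = [i,j]"
  unfolding mindices_def by (cases \<gamma>; cases "tl \<gamma>") auto

lemma mindices_ne: "(mindices k :: 'a::euclidean_space list set) \<noteq> {}"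
proof -
  obtain i :: 'a where "i \<in> Basis" using nonempty_Basis by blast
  hence "replicate k i \<in> mindices k" unfolding mindices_def by auto
  thus ?thesis by blast
qed

lemma normD_le:
  assumes "\<And>\<gamma>. \<gamma> \<in> (mindices k :: 'a::euclidean_space list set) \<Longrightarrow> sup0 (dpart \<gamma> f) \<le> B"
  shows "normD k f \<le> B"
  unfolding normD_def using assms finite_mindices mindices_ne by (subst Max_le_iff) auto

lemma psi_den:
  assumes ac: "\<forall>r. 0 < r \<and> r \<le> 1 \<longrightarrow> \<psi> r \<le> r powr \<alpha> / c" "0 < c" "real k \<le> \<alpha>"
    and xi: "0 < \<xi>" "\<xi> \<le> t" "t \<le> 1"
  shows "\<psi> \<xi> * \<xi> powr (- real k) \<le> t powr (\<alpha> - real k) / c"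
proof -
  have "\<psi> \<xi> * \<xi> powr (- real k) \<le> \<xi> powr \<alpha> / c * \<xi> powr (- real k)"
    using ac(1) xi by (intro mult_right_mono) auto
  also have "\<dots> = \<xi> powr (\<alpha> + - real k) / c" by (simp only: powr_add) simp
  also have "\<dots> \<le> t powr (\<alpha> - real k) / c"
  proof -
    have "\<xi> powr (\<alpha> - real k) \<le> t powr (\<alpha> - real k)"
      by (rule powr_mono2) (use xi ac in auto)
    thus ?thesis using ac(2) by (simp add: divide_right_mono)
  qed
  finally show ?thesis .
qed

lemma hol_step:
  assumes bh: "bdd_above (hquot k \<psi> g)" and i: "i \<in> Basis"
    and pos: "\<forall>r. 0 < r \<and> r \<le> 1 \<longrightarrow> 0 < \<psi> r"
    and ac: "\<forall>r. 0 < r \<and> r \<le> 1 \<longrightarrow> \<psi> r \<le> r powr \<alpha> / c" "0 < c" "real k \<le> \<alpha>"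
    and xi: "0 < \<xi>" "\<xi> \<le> t" "t \<le> 1"
  shows "\<bar>g (x + \<xi> *\<^sub>R i) - g x\<bar> \<le> hsemi k \<psi> g * (t powr (\<alpha> - real k) / c)"
proof -
  have nh: "norm (\<xi> *\<^sub>R i) = \<xi>" using xi i by (simp add: norm_Basis)
  have hb: "\<bar>g (x + \<xi> *\<^sub>R i) - g x\<bar> \<le> hsemi k \<psi> g * (\<psi> \<xi> * \<xi> powr (- real k))"
    using hq_bound[OF bh, of "\<xi> *\<^sub>R i" x] nh xi pos by simp
  have d: "0 < \<psi> \<xi> * \<xi> powr (- real k)" using pos xi by simp
  have S0: "0 \<le> hsemi k \<psi> g"
  proof (rule ccontr)
    assume "\<not> 0 \<le> hsemi k \<psi> g"
    hence "hsemi k \<psi> g * (\<psi> \<xi> * \<xi> powr (- real k)) < 0" using d by (simp add: mult_neg_pos)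
    with hb show False by linarith
  qed
  have "hsemi k \<psi> g * (\<psi> \<xi> * \<xi> powr (- real k)) \<le> hsemi k \<psi> g * (t powr (\<alpha> - real k) / c)"
    using psi_den[OF ac xi] S0 by (rule mult_left_mono)
  with hb show ?thesis by linarith
qed

lemma part1:
  assumes pos: "\<forall>r. 0 < r \<and> r \<le> 1 \<longrightarrow> 0 < \<psi> r" and one: "\<psi> 1 = 1"
    and I: "I_psi \<psi> \<subseteq> {ereal 1<..<ereal 2}"
  shows "\<exists>\<epsilon>0>0. \<forall>\<epsilon>. 0 < \<epsilon> \<and> \<epsilon> < \<epsilon>0 \<longrightarrow>
              (\<exists>C>0. \<forall>f::'a::euclidean_space \<Rightarrow> real. f \<in> Cpsi \<psi> \<longrightarrow>
                 normD 1 f \<le> C * sup0 f + \<epsilon> * semiD 1 \<psi> f)"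
proof -
  have I1: "I_psi \<psi> \<subseteq> {ereal (real 1)<..<ereal (real 1 + 1)}" using I by simp
  obtain \<alpha> c where ac: "\<alpha> > real 1" "0 < c" "c \<le> 1"
      "\<forall>r. 0 < r \<and> r \<le> 1 \<longrightarrow> \<psi> r \<le> r powr \<alpha> / c"
    using get_alpha[OF pos one I1] by blast
  show ?thesis
  proof (rule exI[of _ 1], intro conjI allI impI)
    fix \<epsilon> :: real assume \<epsilon>: "0 < \<epsilon> \<and> \<epsilon> < 1"
    define t where "t = (c * \<epsilon>) powr (1 / (\<alpha> - real 1))"
    have ce: "0 < c * \<epsilon>" "c * \<epsilon> \<le> 1" using ac \<epsilon> by (auto simp: mult_le_one)
    have t0: "0 < t" unfolding t_def using ce ac(2) \<epsilon> by simp
    have t1: "t \<le> 1" unfolding t_def using ce ac by (intro powr_le1) auto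
    have tp: "t powr (\<alpha> - real 1) = c * \<epsilon>" unfolding t_def using ce ac by (simp add: powr_powr)
    have tpc: "t powr (\<alpha> - real 1) / c = \<epsilon>" using tp ac(2) by simp
    show "\<exists>C>0. \<forall>f::'a \<Rightarrow> real. f \<in> Cpsi \<psi> \<longrightarrow> normD 1 f \<le> C * sup0 f + \<epsilon> * semiD 1 \<psi> f"
    proof (intro exI[of _ "2 / t"] conjI allI impI)
      show "0 < 2 / t" using t0 by simp
      fix f :: "'a \<Rightarrow> real" assume "f \<in> Cpsi \<psi>"
      hence ck: "Cpsi_k \<psi> 1 f" by (rule get_k[OF pos one I1])
      have hp: "\<And>i. i \<in> Basis \<Longrightarrow> has_pdiff i f"
        using ck unfolding Cpsi_k_def apply (elim conjE) apply (drule spec[of _ "[]"]) by simp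
      have bf: "bounded (range f)"
        using ck unfolding Cpsi_k_def apply (elim conjE) apply (drule spec[of _ "[]"])+ by simp
      have bh: "\<And>i. i \<in> Basis \<Longrightarrow> bdd_above (hquot 1 \<psi> (pdiff i f))"
      proof -
        fix i :: 'a assume "i \<in> Basis"
        hence "set [i] \<subseteq> Basis \<and> length [i] = 1" by simp
        moreover have "\<forall>\<gamma>. set \<gamma> \<subseteq> Basis \<and> length \<gamma> = 1 \<longrightarrow> bdd_above (hquot 1 \<psi> (dpart \<gamma> f))"
          using ck unfolding Cpsi_k_def by (rule conjunct2[THEN conjunct2])
        ultimately show "bdd_above (hquot 1 \<psi> (pdiff i f))" by (metis dpart.simps)
      qed
      have each: "sup0 (pdiff i f) \<le> 2 / t * sup0 f + \<epsilon> * semiD 1 \<psi> f" if i: "i \<in> Basis" for i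
      proof (rule sup0_le)
        fix x
        obtain \<xi> where xi: "0 < \<xi>" "\<xi> < t"
            "\<bar>pdiff i f x\<bar> \<le> 2 * sup0 f / t + \<bar>pdiff i f (x + \<xi> *\<^sub>R i) - pdiff i f x\<bar>"
          using key1d[OF hp[OF i] bf t0] by blast
        have "\<bar>pdiff i f (x + \<xi> *\<^sub>R i) - pdiff i f x\<bar> \<le> hsemi 1 \<psi> (pdiff i f) * (t powr (\<alpha> - real 1) / c)"
          using hol_step[OF bh[OF i] i pos ac(4) ac(2), of \<xi> t x] ac(1) xi t1 by simp
        hence "\<bar>pdiff i f (x + \<xi> *\<^sub>R i) - pdiff i f x\<bar> \<le> \<epsilon> * hsemi 1 \<psi> (pdiff i f)"
          unfolding tpc by (simp only: mult.commute)
        also have "\<dots> \<le> \<epsilon> * semiD 1 \<psi> f"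
          using semi_le[of "[i]" 1 \<psi> f] i \<epsilon> by (auto simp: mindices_def intro: mult_left_mono)
        finally show "\<bar>pdiff i f x\<bar> \<le> 2 / t * sup0 f + \<epsilon> * semiD 1 \<psi> f" using xi(3) by simp
      qed
      show "normD 1 f \<le> 2 / t * sup0 f + \<epsilon> * semiD 1 \<psi> f"
      proof (rule normD_le)
        fix \<gamma> :: "'a list" assume "\<gamma> \<in> mindices 1"
        then obtain i where "i \<in> Basis" "\<gamma> = [i]" using mindices1 by blast
        thus "sup0 (dpart \<gamma> f) \<le> 2 / t * sup0 f + \<epsilon> * semiD 1 \<psi> f" using each by simp
      qed
    qed
  qed simp
qed

lemma alg:
  fixes t A B F sd :: real
  assumes t: "0 < t" "t \<le> 1" and sd: "0 \<le> sd"
    and a: "A \<le> 8 * F / t + t / 4 * B" and b: "B \<le> 2 * A / t + sd"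
  shows "A + B \<le> (16 / t + 32 / t^2) * F + 5 / 2 * sd"
proof -
  have "2 * A / t \<le> 2 / t * (8 * F / t + t / 4 * B)" proof -
    have "2 * A \<le> 2 * (8 * F / t + t / 4 * B)" using a by (rule mult_left_mono) simp
    thus ?thesis using t by (simp add: divide_right_mono)
  qed
  also have "\<dots> = 16 * F / t^2 + B / 2" using t by (simp add: field_simps power2_eq_square)
  finally have "B \<le> 16 * F / t^2 + B / 2 + sd" using b by linarith
  hence b2: "B \<le> 32 * F / t^2 + 2 * sd" by linarith
  have "t / 4 * B \<le> t / 4 * (32 * F / t^2 + 2 * sd)" using b2 t by (intro mult_left_mono) auto
  also have "\<dots> = 8 * F / t + t * sd / 2" using t by (simp add: field_simps power2_eq_square)
  also have "t * sd / 2 \<le> sd / 2" using t sd by (simp add: mult_left_le_one_le)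
  hence "8 * F / t + t * sd / 2 \<le> 8 * F / t + sd / 2" by linarith
  finally have "A \<le> 16 * F / t + sd / 2" using a by linarith
  moreover have "(16 / t + 32 / t^2) * F = 16 * F / t + 32 * F / t^2" by (simp add: field_simps)
  ultimately show ?thesis using b2 by linarith
qed

lemma part2:
  assumes pos: "\<forall>r. 0 < r \<and> r \<le> 1 \<longrightarrow> 0 < \<psi> r" and one: "\<psi> 1 = 1"
    and I: "I_psi \<psi> \<subseteq> {ereal 2<..<ereal 3}"
  shows "\<exists>\<epsilon>0>0. \<forall>\<epsilon>. 0 < \<epsilon> \<and> \<epsilon> < \<epsilon>0 \<longrightarrow>
              (\<exists>C>0. \<forall>f::'a::euclidean_space \<Rightarrow> real. f \<in> Cpsi \<psi> \<longrightarrow>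
                 normD 1 f + normD 2 f \<le> C * sup0 f + \<epsilon> * semiD 2 \<psi> f)"
proof -
  have I2: "I_psi \<psi> \<subseteq> {ereal (real 2)<..<ereal (real 2 + 1)}" using I by simp
  obtain \<alpha> c where ac: "\<alpha> > real 2" "0 < c" "c \<le> 1"
      "\<forall>r. 0 < r \<and> r \<le> 1 \<longrightarrow> \<psi> r \<le> r powr \<alpha> / c"
    using get_alpha[OF pos one I2] by blast
  show ?thesis
  proof (rule exI[of _ 1], intro conjI allI impI)
    fix \<epsilon> :: real assume \<epsilon>: "0 < \<epsilon> \<and> \<epsilon> < 1"
    define a where "a = 2 * c * \<epsilon> / 5"
    define t where "t = a powr (1 / (\<alpha> - real 2))"
    have "c * \<epsilon> \<le> 1" using ac \<epsilon> by (auto simp: mult_le_one)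
    hence ce: "0 < a" "a \<le> 1" using ac \<epsilon> unfolding a_def by auto
    have an: "a \<noteq> 0" using ce by linarith
    have t0: "0 < t" unfolding t_def using an by (simp only: powr_gt_zero) simp
    have t1: "t \<le> 1" unfolding t_def using ce ac by (intro powr_le1) auto
    have tp: "t powr (\<alpha> - real 2) = a" unfolding t_def using ce ac by (simp add: powr_powr)
    define d where "d = t powr (\<alpha> - real 2) / c"
    have dd: "d = 2 * \<epsilon> / 5" unfolding d_def tp a_def using ac(2) by simp
    have d0: "0 < d" using dd \<epsilon> by simp
    define C where "C = 16 / t + 32 / t^2"
    show "\<exists>C>0. \<forall>f::'a \<Rightarrow> real. f \<in> Cpsi \<psi> \<longrightarrow> normD 1 f + normD 2 f \<le> C * sup0 f + \<epsilon> * semiD 2 \<psi> f"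
    proof (intro exI[of _ C] conjI allI impI)
      show "0 < C" using t0 unfolding C_def by (intro add_pos_pos divide_pos_pos) auto
      fix f :: "'a \<Rightarrow> real" assume "f \<in> Cpsi \<psi>"
      hence ck: "Cpsi_k \<psi> 2 f" by (rule get_k[OF pos one I2])
      have c1: "\<forall>\<gamma>. set \<gamma> \<subseteq> Basis \<and> length \<gamma> < 2 \<longrightarrow> (\<forall>i\<in>Basis. has_pdiff i (dpart \<gamma> f))"
        using ck unfolding Cpsi_k_def by (rule conjunct1)
      have c2: "\<forall>\<gamma>. set \<gamma> \<subseteq> Basis \<and> length \<gamma> \<le> 2 \<longrightarrow>
          continuous_on UNIV (dpart \<gamma> f) \<and> bounded (range (dpart \<gamma> f))"
        using ck unfolding Cpsi_k_def by (rule conjunct2[THEN conjunct1])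
      have c3: "\<forall>\<gamma>. set \<gamma> \<subseteq> Basis \<and> length \<gamma> = 2 \<longrightarrow> bdd_above (hquot 2 \<psi> (dpart \<gamma> f))"
        using ck unfolding Cpsi_k_def by (rule conjunct2[THEN conjunct2])
      have hp0: "\<And>i. i \<in> Basis \<Longrightarrow> has_pdiff i f" using c1[rule_format, of "[]"] by simp
      have hp1: "\<And>i j. i \<in> Basis \<Longrightarrow> j \<in> Basis \<Longrightarrow> has_pdiff i (pdiff j f)"
        using c1[rule_format, of "[j]" for j] by simp
      have bf: "bounded (range f)" using c2[rule_format, of "[]"] by simp
      have bf1: "\<And>j. j \<in> Basis \<Longrightarrow> bounded (range (pdiff j f))" using c2[rule_format, of "[j]" for j] by simp
      have bf2: "\<And>i j. i \<in> Basis \<Longrightarrow> j \<in> Basis \<Longrightarrow> bounded (range (pdiff i (pdiff j f)))"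
        using c2[rule_format, of "[i,j]" for i j] by simp
      have bh: "\<And>i j. i \<in> Basis \<Longrightarrow> j \<in> Basis \<Longrightarrow> bdd_above (hquot 2 \<psi> (pdiff i (pdiff j f)))"
        using c3[rule_format, of "[i,j]" for i j] by simp
      define F where "F = sup0 f"
      define A where "A = normD 1 f"
      define B where "B = normD 2 f"
      define S where "S = semiD 2 \<psi> f"
      have d2: "\<And>i j y. i \<in> Basis \<Longrightarrow> j \<in> Basis \<Longrightarrow> \<bar>pdiff i (pdiff j f) y\<bar> \<le> B"
      proof -
        fix i j :: 'a and y assume ij: "i \<in> Basis" "j \<in> Basis"
        have "\<bar>pdiff i (pdiff j f) y\<bar> \<le> sup0 (dpart [i,j] f)" using le_sup0[OF bf2[OF ij]] by simp
        also have "\<dots> \<le> B" unfolding B_def using ij by (intro sup0_le_normD) (simp add: mindices_def)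
        finally show "\<bar>pdiff i (pdiff j f) y\<bar> \<le> B" .
      qed
      have B0: "0 \<le> B" using d2[of "SOME i. i \<in> Basis" "SOME i. i \<in> Basis" 0] nonempty_Basis
        by (metis abs_ge_zero order_trans some_in_eq)
      have hdiff: "\<bar>pdiff i (pdiff j f) (x + \<xi> *\<^sub>R i) - pdiff i (pdiff j f) x\<bar> \<le> S * d"
        and hs0: "0 \<le> hsemi 2 \<psi> (pdiff i (pdiff j f))"
        if ij: "(i::'a) \<in> Basis" "j \<in> Basis" and xi: "0 < \<xi>" "\<xi> \<le> t" for i j x \<xi>
      proof -
        have h: "\<bar>pdiff i (pdiff j f) (x + \<xi> *\<^sub>R i) - pdiff i (pdiff j f) x\<bar> \<le> hsemi 2 \<psi> (pdiff i (pdiff j f)) * d"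
          unfolding d_def using hol_step[OF bh[OF ij] ij(1) pos ac(4) ac(2), of \<xi> t x] ac(1) xi t1 by simp
        show hs: "0 \<le> hsemi 2 \<psi> (pdiff i (pdiff j f))"
        proof (rule ccontr)
          assume "\<not> 0 \<le> hsemi 2 \<psi> (pdiff i (pdiff j f))"
          hence "hsemi 2 \<psi> (pdiff i (pdiff j f)) * d < 0" using d0 by (simp add: mult_neg_pos)
          with h show False by linarith
        qed
        have "hsemi 2 \<psi> (pdiff i (pdiff j f)) \<le> S"
          unfolding S_def using semi_le[of "[i,j]" 2 \<psi> f] ij by (simp add: mindices_def)
        hence "hsemi 2 \<psi> (pdiff i (pdiff j f)) * d \<le> S * d" using d0 by (simp add: mult_right_mono)
        with h show "\<bar>pdiff i (pdiff j f) (x + \<xi> *\<^sub>R i) - pdiff i (pdiff j f) x\<bar> \<le> S * d" by linarith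
      qed
      have Sd0: "0 \<le> S * d"
      proof -
        obtain i :: 'a where i: "i \<in> Basis" using nonempty_Basis by blast
        have "0 \<le> hsemi 2 \<psi> (pdiff i (pdiff i f))" using hs0[OF i i t0 order_refl] .
        moreover have "hsemi 2 \<psi> (pdiff i (pdiff i f)) \<le> S"
          unfolding S_def using semi_le[of "[i,i]" 2 \<psi> f] i by (simp add: mindices_def)
        ultimately show ?thesis using d0 by simp
      qed
      have s0: "0 < t / 4" using t0 by simp
      have stepA: "A \<le> 2 * F / (t/4) + t / 4 * B"
        unfolding A_def
      proof (rule normD_le)
        fix \<gamma> :: "'a list" assume "\<gamma> \<in> mindices 1"
        then obtain j where j: "j \<in> Basis" "\<gamma> = [j]" using mindices1 by blast
        have "sup0 (pdiff j f) \<le> 2 * F / (t/4) + t / 4 * B"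
        proof (rule sup0_le)
          fix x
          obtain \<xi> where xi: "0 < \<xi>" "\<xi> < t/4"
              "\<bar>pdiff j f x\<bar> \<le> 2 * sup0 f / (t/4) + \<bar>pdiff j f (x + \<xi> *\<^sub>R j) - pdiff j f x\<bar>"
            using key1d[OF hp0[OF j(1)] bf s0] by blast
          have "\<bar>pdiff j f (x + \<xi> *\<^sub>R j) - pdiff j f x\<bar> \<le> \<xi> * B"
            using lip1d[OF hp1[OF j(1) j(1)] xi(1)] d2[OF j(1) j(1)] by blast
          also have "\<dots> \<le> t / 4 * B" using xi(2) B0 by (intro mult_right_mono) auto
          finally show "\<bar>pdiff j f x\<bar> \<le> 2 * F / (t/4) + t / 4 * B" using xi(3) unfolding F_def by linarith
        qed
        thus "sup0 (dpart \<gamma> f) \<le> 2 * F / (t/4) + t / 4 * B" using j by simp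
      qed
      have stepB: "B \<le> 2 * A / t + S * d"
        unfolding B_def
      proof (rule normD_le)
        fix \<gamma> :: "'a list" assume "\<gamma> \<in> mindices 2"
        then obtain i j where ij: "i \<in> Basis" "j \<in> Basis" "\<gamma> = [i,j]" using mindices2 by blast
        have "sup0 (pdiff i (pdiff j f)) \<le> 2 * A / t + S * d"
        proof (rule sup0_le)
          fix x
          obtain \<xi> where xi: "0 < \<xi>" "\<xi> < t"
              "\<bar>pdiff i (pdiff j f) x\<bar> \<le> 2 * sup0 (pdiff j f) / t + \<bar>pdiff i (pdiff j f) (x + \<xi> *\<^sub>R i) - pdiff i (pdiff j f) x\<bar>"
            using key1d[OF hp1[OF ij(1,2)] bf1[OF ij(2)] t0] by blast
          have "sup0 (pdiff j f) \<le> A" unfolding A_def using ij sup0_le_normD[of "[j]" 1 f]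
            by (simp add: mindices_def)
          hence "2 * sup0 (pdiff j f) / t \<le> 2 * A / t" using t0 by (simp add: divide_right_mono)
          moreover have "\<bar>pdiff i (pdiff j f) (x + \<xi> *\<^sub>R i) - pdiff i (pdiff j f) x\<bar> \<le> S * d"
            using hdiff[OF ij(1,2) xi(1)] xi(2) by simp
          ultimately show "\<bar>pdiff i (pdiff j f) x\<bar> \<le> 2 * A / t + S * d" using xi(3) by linarith
        qed
        thus "sup0 (dpart \<gamma> f) \<le> 2 * A / t + S * d" using ij by simp
      qed
      have stepA': "A \<le> 8 * F / t + t / 4 * B" using stepA t0 by simp
      have "A + B \<le> C * F + 5 / 2 * (S * d)"
        unfolding C_def by (rule alg[OF t0 t1 Sd0 stepA' stepB])
      also have "5 / 2 * (S * d) = \<epsilon> * S" unfolding dd by simp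
      finally show "normD 1 f + normD 2 f \<le> C * sup0 f + \<epsilon> * semiD 2 \<psi> f"
        unfolding A_def B_def F_def S_def .
    qed
  qed simp
qed


theorem lemma2p3:
  fixes \<psi> :: "real \<Rightarrow> real"
  assumes pos: "\<forall>r. 0 < r \<and> r \<le> 1 \<longrightarrow> 0 < \<psi> r"
    and one: "\<psi> 1 = 1"
    and lim: "(\<psi> \<longlongrightarrow> 0) (at_right 0)"
  shows "(I_psi \<psi> \<subseteq> {ereal 1<..<ereal 2} \<longrightarrow>
           (\<exists>\<epsilon>0>0. \<forall>\<epsilon>. 0 < \<epsilon> \<and> \<epsilon> < \<epsilon>0 \<longrightarrow>
              (\<exists>C>0. \<forall>f::'a::euclidean_space \<Rightarrow> real. f \<in> Cpsi \<psi> \<longrightarrow>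
                 normD 1 f \<le> C * sup0 f + \<epsilon> * semiD 1 \<psi> f)))
       \<and> (I_psi \<psi> \<subseteq> {ereal 2<..<ereal 3} \<longrightarrow>
           (\<exists>\<epsilon>0>0. \<forall>\<epsilon>. 0 < \<epsilon> \<and> \<epsilon> < \<epsilon>0 \<longrightarrow>
              (\<exists>C>0. \<forall>f::'a::euclidean_space \<Rightarrow> real. f \<in> Cpsi \<psi> \<longrightarrow>
                 normD 1 f + normD 2 f \<le> C * sup0 f + \<epsilon> * semiD 2 \<psi> f)))"
    using part1[OF pos one] part2[OF pos one] by blast

end
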